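(* Let $Q$ be a Moufang loop. Then $xa^{-3}\cdot a^3y=T_a^{-1}(T_a(x)T_a(y))$ for all $a,x,y\in Q$, where $T_a=R_a^{-1}L_a$.
   Context: A loop is a magma with identity in which the left translations $L_a(y)=ay$ and right translations $R_a(y)=ya$ are bijections; it is Moufang if it satisfies $xy\cdot zx=(x\cdot yz)x$ (Moufang loops are power associative, so $a^{\pm3}$ are defined). *)

theory Defs
  imports Main
begin

definition loop :: "('a \<Rightarrow> 'a \<Rightarrow> 'a) \<Rightarrow> 'a \<Rightarrow> bool" where
  "loop m e \<longleftrightarrow> (\<forall>x. m e x = x \<and> m x e = x) \<and>
     (\<forall>a. bij (\<lambda>y. m a y)) \<and> (\<forall>a. bij (\<lambda>y. m y a))"

definition moufang_loop :: "('a \<Rightarrow> 'a \<Rightarrow> 'a) \<Rightarrow> 'a \<Rightarrow> bool" where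
  "moufang_loop m e \<longleftrightarrow> loop m e \<and>
     (\<forall>x y z. m (m x y) (m z x) = m (m x (m y z)) x)"

definition Lt :: "('a \<Rightarrow> 'a \<Rightarrow> 'a) \<Rightarrow> 'a \<Rightarrow> 'a \<Rightarrow> 'a" where
  "Lt m a = (\<lambda>y. m a y)"

definition Rt :: "('a \<Rightarrow> 'a \<Rightarrow> 'a) \<Rightarrow> 'a \<Rightarrow> 'a \<Rightarrow> 'a" where
  "Rt m a = (\<lambda>y. m y a)"

text \<open>Inverse of a (in a Moufang loop left and right inverses coincide).\<close>
definition linv :: "('a \<Rightarrow> 'a \<Rightarrow> 'a) \<Rightarrow> 'a \<Rightarrow> 'a \<Rightarrow> 'a" where
  "linv m e a = (THE b. m a b = e)"

text \<open>a^3 (well defined by power associativity) and a^{-3} = (a^{-1})^3.\<close>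
definition cube :: "('a \<Rightarrow> 'a \<Rightarrow> 'a) \<Rightarrow> 'a \<Rightarrow> 'a" where
  "cube m a = m a (m a a)"

definition neg_cube :: "('a \<Rightarrow> 'a \<Rightarrow> 'a) \<Rightarrow> 'a \<Rightarrow> 'a \<Rightarrow> 'a" where
  "neg_cube m e a = cube m (linv m e a)"

definition Tmap :: "('a \<Rightarrow> 'a \<Rightarrow> 'a) \<Rightarrow> 'a \<Rightarrow> 'a \<Rightarrow> 'a" where
  "Tmap m a = inv (Rt m a) \<circ> Lt m a"

end

theory Submission
  imports Defs
begin

locale ml = fixes m :: "'a \<Rightarrow> 'a \<Rightarrow> 'a" (infixl "\<cdot>" 70) and e :: 'a and i :: "'a \<Rightarrow> 'a"
  assumes lid: "e \<cdot> x = x" and rid: "x \<cdot> e = x"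
  and lcan: "a \<cdot> y = a \<cdot> z \<Longrightarrow> y = z" and rcan: "y \<cdot> a = z \<cdot> a \<Longrightarrow> y = z"
  and rinv: "x \<cdot> i x = e"
  and mou: "(x \<cdot> y) \<cdot> (z \<cdot> x) = (x \<cdot> (y \<cdot> z)) \<cdot> x"
begin
lemma lip1: "x \<cdot> (i x \<cdot> z) = z" by (metis mou rcan lid rinv)
lemma linv: "i x \<cdot> x = e" by (metis lip1 rid lcan)
lemma lip2: "i x \<cdot> (x \<cdot> z) = z" using lip1 lcan by metis
lemma flex: "x \<cdot> (z \<cdot> x) = (x \<cdot> z) \<cdot> x"
  using mou[of x e z] by (simp only: lid rid)
lemma rip1: "(z \<cdot> x) \<cdot> i x = z" by (metis lip1 mou rid)
lemma rip2: "(z \<cdot> i x) \<cdot> x = z" by (metis rip1 rcan)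
lemma ii: "i (i x) = x" by (metis linv rinv lcan)
lemma ralt: "(z \<cdot> x) \<cdot> x = z \<cdot> (x \<cdot> x)" by (metis lip1 flex mou lcan)
lemma lalt: "x \<cdot> (x \<cdot> z) = (x \<cdot> x) \<cdot> z" by (metis rip1 flex mou rcan)
lemma lmou: "b \<cdot> (t \<cdot> (b \<cdot> s)) = ((b \<cdot> t) \<cdot> b) \<cdot> s" by (smt (verit, del_insts) lip2 mou rip1)
lemma anti: "i (x \<cdot> y) = i y \<cdot> i x"
proof -
  have "x = (x \<cdot> y) \<cdot> i y" by (simp add: rip1)
  hence "i (x \<cdot> y) \<cdot> x = i y" by (metis lip2)
  thus ?thesis by (metis rip1)
qed
lemma rmou: "((s \<cdot> b) \<cdot> t) \<cdot> b = s \<cdot> (b \<cdot> (t \<cdot> b))"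
proof -
  have "i (((s \<cdot> b) \<cdot> t) \<cdot> b) = i (s \<cdot> (b \<cdot> (t \<cdot> b)))"
    by (simp add: anti lmou)
  thus ?thesis by (metis ii)
qed
lemma s1: "(a \<cdot> x) \<cdot> i a = a \<cdot> (x \<cdot> i a)"
proof -
  have h: "(a \<cdot> (x \<cdot> i a)) \<cdot> a = a \<cdot> x"
  proof -
    have "(a \<cdot> (x \<cdot> i a)) \<cdot> a = (a \<cdot> x) \<cdot> (i a \<cdot> a)" by (simp only: mou)
    also have "\<dots> = a \<cdot> x" by (simp only: linv rid)
    finally show ?thesis .
  qed
  have "(a \<cdot> x) \<cdot> i a = ((a \<cdot> (x \<cdot> i a)) \<cdot> a) \<cdot> i a" by (simp only: h)
  also have "\<dots> = a \<cdot> (x \<cdot> i a)" by (simp only: rip1)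
  finally show ?thesis .
qed
lemma main: "(((a \<cdot> x) \<cdot> i a) \<cdot> ((a \<cdot> y) \<cdot> i a)) \<cdot> a
   = a \<cdot> ((x \<cdot> (i a \<cdot> (i a \<cdot> i a))) \<cdot> ((a \<cdot> (a \<cdot> a)) \<cdot> y))"
proof -
  define b where "b = a \<cdot> a"
  define w where "w = a \<cdot> y"
  define u where "u = x \<cdot> i a"
  have ib: "i b = i a \<cdot> i a" unfolding b_def by (rule anti)
  have v: "((a \<cdot> y) \<cdot> i a) \<cdot> i a = w \<cdot> i b" unfolding ib w_def by (rule ralt)
  have Ty: "(a \<cdot> y) \<cdot> i a = (w \<cdot> i b) \<cdot> a"
  proof -
    have "(a \<cdot> y) \<cdot> i a = (((a \<cdot> y) \<cdot> i a) \<cdot> i a) \<cdot> a" by (simp only: rip2)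
    also have "\<dots> = (w \<cdot> i b) \<cdot> a" by (simp only: v)
    finally show ?thesis .
  qed
  have "(((a \<cdot> x) \<cdot> i a) \<cdot> ((a \<cdot> y) \<cdot> i a)) \<cdot> a = ((a \<cdot> u) \<cdot> ((w \<cdot> i b) \<cdot> a)) \<cdot> a"
    unfolding u_def Ty s1[of a x] by (rule refl)
  also have "\<dots> = ((a \<cdot> (u \<cdot> (w \<cdot> i b))) \<cdot> a) \<cdot> a" by (simp only: mou)
  also have "\<dots> = a \<cdot> ((u \<cdot> (w \<cdot> i b)) \<cdot> b)" unfolding b_def by (rule lmou[symmetric])
  also have "(u \<cdot> (w \<cdot> i b)) \<cdot> b = (u \<cdot> i b) \<cdot> (b \<cdot> w)"
    using rmou[of "u \<cdot> i b" b "w \<cdot> i b"] by (simp only: rip2)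
  also have "u \<cdot> i b = x \<cdot> (i a \<cdot> (i a \<cdot> i a))"
  proof -
    have "u \<cdot> i b = ((x \<cdot> i a) \<cdot> i a) \<cdot> i a" unfolding u_def ib by (rule ralt[symmetric])
    also have "\<dots> = x \<cdot> (i a \<cdot> (i a \<cdot> i a))" by (rule rmou)
    finally show ?thesis .
  qed
  also have "b \<cdot> w = (a \<cdot> (a \<cdot> a)) \<cdot> y"
  proof -
    have "b \<cdot> w = a \<cdot> (a \<cdot> (a \<cdot> y))" unfolding b_def w_def by (rule lalt[symmetric])
    also have "\<dots> = ((a \<cdot> a) \<cdot> a) \<cdot> y" by (rule lmou)
    also have "\<dots> = (a \<cdot> (a \<cdot> a)) \<cdot> y" by (simp only: flex)
    finally show ?thesis .
  qed
  finally show ?thesis .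
qed
end

lemma ml_of:
  assumes "moufang_loop m e"
  shows "ml m e (linv m e)"
proof -
  have L: "loop m e" and M: "\<And>x y z. m (m x y) (m z x) = m (m x (m y z)) x"
    using assms unfolding moufang_loop_def by auto
  have id: "\<And>x. m e x = x" "\<And>x. m x e = x" using L unfolding loop_def by auto
  have bl: "\<And>a. bij (\<lambda>y. m a y)" and br: "\<And>a. bij (\<lambda>y. m y a)"
    using L unfolding loop_def by auto
  have lc: "\<And>a y z. m a y = m a z \<Longrightarrow> y = z"
    using bl unfolding bij_def inj_def by blast
  have rc: "\<And>a y z. m y a = m z a \<Longrightarrow> y = z"
    using br unfolding bij_def inj_def by blast
  have ri: "m x (linv m e x) = e" for x
  proof -
    obtain b where b: "m x b = e" using bl[of x] unfolding bij_def surj_def by metis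
    have "linv m e x = b" unfolding linv_def
      by (rule the_equality) (use b lc in auto)
    thus ?thesis using b by simp
  qed
  show ?thesis
    by (rule ml.intro[of m e "linv m e", OF id(1) id(2) lc rc ri M])
qed

theorem proposition1p9:
  fixes m :: "'a \<Rightarrow> 'a \<Rightarrow> 'a" and e :: 'a
  assumes "moufang_loop m e"
  shows "\<forall>a x y. m (m x (neg_cube m e a)) (m (cube m a) y)
           = inv (Tmap m a) (m (Tmap m a x) (Tmap m a y))"
proof (intro allI)
  fix a x y
  interpret ml m e "linv m e" by (rule ml_of[OF assms])
  have L: "loop m e" using assms unfolding moufang_loop_def by auto
  have bl: "bij (Lt m a)" and br: "bij (Rt m a)"
    using L unfolding loop_def Lt_def Rt_def by auto
  have invR: "inv (Rt m a) w = m w (linv m e a)" for w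
    by (rule inv_f_eq) (use br in \<open>auto simp: bij_def Rt_def rip2\<close>)
  have T: "Tmap m a z = m (m a z) (linv m e a)" for z
    by (simp add: Tmap_def invR Lt_def)
  have injT: "inj (Tmap m a)"
    unfolding Tmap_def using bl br bij_imp_bij_inv bij_is_inj inj_compose by blast
  define l where "l = m (m x (neg_cube m e a)) (m (cube m a) y)"
  have "Tmap m a l = m (Tmap m a x) (Tmap m a y)"
  proof -
    have "m (m (Tmap m a x) (Tmap m a y)) a = m a l"
      unfolding T l_def neg_cube_def cube_def by (rule main)
    hence "m (m (m (Tmap m a x) (Tmap m a y)) a) (linv m e a) = m (m a l) (linv m e a)" by simp
    thus ?thesis by (simp add: rip1 T)
  qed
  hence "inv (Tmap m a) (m (Tmap m a x) (Tmap m a y)) = l"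
    using injT by (metis inv_f_f)
  thus "m (m x (neg_cube m e a)) (m (cube m a) y)
           = inv (Tmap m a) (m (Tmap m a x) (Tmap m a y))" by (simp add: l_def)
qed

end
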